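(* Let $1\le n\le l$ be integers, put $c=2^l-3^n$ and $r=\gcd(l,n)$. Let $s\in S_{l,n}$ and consider the integer $3n+c$ cycle associated with $s$, whose elements are the integers $\varphi(t)$ for $t\in\sigma(s)$; its odd elements are the values $\varphi(t)$ with $t\in\sigma(s)$ and $t_1=1$. Then $$\min_{t\in\sigma(s)}\varphi(t)\le M_{l,n}\qquad\text{and}\qquad N_{l,n}\le \max\{\varphi(t): t\in\sigma(s),\ t_1=1\},$$ where $$N_{l,n}=2M_{l,n}-\sum_{i=0}^{r-1}2^{\,i l/r}\,3^{\,n-1-i n/r}.$$
   Context: $S_{l,n}$ denotes the set of 0-1 sequences $s=(s_1,\ldots,s_l)$ of length $l$ with exactly $n$ ones. For such $s$, $$\varphi(s)=\sum_{j=1}^{l} s_j\, 3^{\,s_{j+1}+\cdots+s_{l}}\,2^{\,j-1}.$$ The left shift is $\lambda_l(s_1,\ldots,s_l)=(s_2,\ldots,s_l,s_1)$ and $\sigma(s)=\{\lambda_l^k(s):k=1,\ldots,l\}$ is the orbit of $s$ under rotation. $M_{l,n}=\max_{s\in S_{l,n}}\min_{t\in\sigma(s)}\varphi(t)$. For an odd integer $c$, the $3n+c$ map on integers sends $x$ to $(3x+c)/2$ if $x$ is odd and to $x/2$ if $x$ is even. With $c=2^l-3^n$, the sequence $x_i=\varphi(\lambda_l^i(s))$, $i=0,\ldots,l$, is a cycle of this map of length $l$ (obtained by multiplying by $c$ the rational Collatz cycle through $\varphi(s)/(2^l-3^n)$), in which $x_i$ is odd exactly when the first entry of $\lambda_l^i(s)$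 is $1$; this cycle is called the $3n+c$ cycle corresponding to $s$ (it need not be primitive, i.e. its elements may share a common divisor). *)

theory Defs
  imports Main
begin

text \<open>0-1 sequences of length l are lists over {0,1}; entry s_j is s ! (j-1).\<close>

definition S :: "nat \<Rightarrow> nat \<Rightarrow> nat list set" where
  "S l n = {s. length s = l \<and> set s \<subseteq> {0,1} \<and> sum_list s = n}"

definition phi :: "nat list \<Rightarrow> int" where
  "phi s = (\<Sum>j<length s. int (s ! j) * 3 ^ (\<Sum>k\<in>{Suc j..<length s}. s ! k) * 2 ^ j)"

definition lshift :: "nat list \<Rightarrow> nat list" where
  "lshift s = rotate1 s"

definition orbit :: "nat list \<Rightarrow> nat list set" where
  "orbit s = {(lshift ^^ k) s | k. k \<in> {1..length s}}"

definition M :: "nat \<Rightarrow> nat \<Rightarrow> int" where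
  "M l n = Max ((\<lambda>s. Min (phi ` orbit s)) ` S l n)"

definition N :: "nat \<Rightarrow> nat \<Rightarrow> int" where
  "N l n = 2 * M l n -
     (\<Sum>i<gcd l n. 2 ^ (i * l div gcd l n) * 3 ^ (n - 1 - i * n div gcd l n))"

end

theory Submission imports Defs begin

definition ones :: "nat list \<Rightarrow> nat \<Rightarrow> nat" where
  "ones t m = (\<Sum>i<m. t ! i)"

lemma sum_list_rotate1: "sum_list (rotate1 xs) = (sum_list xs :: nat)"
  by (cases xs) auto

lemma sum_list_rotate: "sum_list (rotate k xs) = (sum_list xs :: nat)"
  by (induct k) (auto simp: rotate_def sum_list_rotate1)

lemma rotate_in_S: "s \<in> S l n \<Longrightarrow> rotate k s \<in> S l n"
  by (auto simp: S_def sum_list_rotate)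

lemma lshift_pow: "(lshift ^^ k) = rotate k"
proof -
  have "lshift = rotate1" by (rule ext) (simp add: lshift_def)
  thus ?thesis by (simp add: rotate_def)
qed

lemma orbit_eq: "orbit s = (\<lambda>k. rotate k s) ` {1..length s}"
  by (auto simp: orbit_def lshift_pow)

lemma rotate_in_orbit:
  assumes "s \<noteq> []" shows "rotate a s \<in> orbit s"
proof -
  let ?L = "length s"
  define k where "k = (if a mod ?L = 0 then ?L else a mod ?L)"
  have L: "?L > 0" using assms by simp
  have k: "k \<in> {1..?L}" using L by (auto simp: k_def Suc_le_eq)
  have "rotate k s = rotate (k mod ?L) s" by (rule rotate_conv_mod)
  also have "k mod ?L = a mod ?L" using L by (auto simp: k_def)
  also have "rotate (a mod ?L) s = rotate a s" by (rule rotate_conv_mod[symmetric])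
  finally have "rotate k s = rotate a s" .
  thus ?thesis using k unfolding orbit_eq by (metis image_eqI)
qed

lemma orbit_S: "s \<in> S l n \<Longrightarrow> orbit s \<subseteq> S l n"
  by (auto simp: orbit_eq rotate_in_S)

lemma finite_orbit: "finite (orbit s)" by (simp add: orbit_eq)

lemma finite_S: "finite (S l n)"
proof -
  have "S l n \<subseteq> {xs. set xs \<subseteq> {0,1} \<and> length xs = l}" by (auto simp: S_def)
  moreover have "finite {xs. set xs \<subseteq> {0::nat,1} \<and> length xs = l}"
    by (rule finite_lists_length_eq) simp
  ultimately show ?thesis by (rule finite_subset)
qed

lemma S_nth: "t \<in> S l n \<Longrightarrow> j < l \<Longrightarrow> t ! j = 0 \<or> t ! j = 1"
  unfolding S_def using nth_mem by fastforce

lemma ones_total: "t \<in> S l n \<Longrightarrow> ones t l = n"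
  by (auto simp: S_def ones_def sum_list_sum_nth atLeast0LessThan)

lemma tail_sum: assumes "t \<in> S l n" "j < l"
  shows "(\<Sum>k\<in>{Suc j..<length t}. t ! k) = n - ones t (Suc j)"
proof -
  have L: "length t = l" using assms by (simp add: S_def)
  have "ones t (Suc j) + (\<Sum>k\<in>{Suc j..<l}. t ! k) = (\<Sum>k\<in>{0..<l}. t ! k)"
    unfolding ones_def atLeast0LessThan[symmetric]
    by (rule sum.atLeastLessThan_concat) (use assms in auto)
  also have "\<dots> = n" using ones_total[OF assms(1)] by (simp add: ones_def atLeast0LessThan)
  finally show ?thesis using L by simp
qed

lemma ones_Suc: "ones t (Suc m) = ones t m + t ! m" by (simp add: ones_def)

lemma ones_mono: "a \<le> b \<Longrightarrow> ones t a \<le> ones t b"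
  unfolding ones_def by (rule sum_mono2) auto


lemma phi_ones: assumes "t \<in> S l n"
  shows "phi t = (\<Sum>j\<in>{j. j < l \<and> t ! j = 1}. 3 ^ (n - ones t (Suc j)) * 2 ^ j)"
proof -
  have L: "length t = l" using assms by (simp add: S_def)
  have "phi t = (\<Sum>j<l. int (t ! j) * 3 ^ (n - ones t (Suc j)) * 2 ^ j)"
    unfolding phi_def L using tail_sum[OF assms] L by (intro sum.cong) auto
  also have "\<dots> = (\<Sum>j<l. if t ! j = 1 then 3 ^ (n - ones t (Suc j)) * 2 ^ j else 0)"
    using S_nth[OF assms] by (intro sum.cong) auto
  also have "\<dots> = (\<Sum>j\<in>{j\<in>{..<l}. t ! j = 1}. 3 ^ (n - ones t (Suc j)) * 2 ^ j)"
    by (rule sum.inter_filter[symmetric]) simp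
  finally show ?thesis by simp
qed

lemma phi_pos: assumes "t \<in> S l n"
  shows "\<exists>p. phi t = (\<Sum>k\<in>{1..n}. 3 ^ (n - k) * 2 ^ (p k)) \<and>
    (\<forall>k\<in>{1..n}. p k < l \<and> ones t (p k) = k - 1 \<and> ones t (Suc (p k)) = k)"
proof -
  define P where "P = {j. j < l \<and> t ! j = 1}"
  define g where "g j = ones t (Suc j)" for j
  have inj: "inj_on g P"
  proof (rule linorder_inj_onI)
    fix x y assume "x < y" "x \<in> P" "y \<in> P"
    then have "ones t (Suc x) \<le> ones t y" by (intro ones_mono) simp
    moreover have "ones t (Suc y) = ones t y + 1" using \<open>y \<in> P\<close> by (simp add: ones_Suc P_def)
    ultimately show "g x \<noteq> g y" by (simp add: g_def)
  qed auto
  have sub: "g ` P \<subseteq> {1..n}"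
  proof
    fix k assume "k \<in> g ` P"
    then obtain j where j: "j \<in> P" "k = g j" by auto
    have "ones t (Suc j) = ones t j + 1" using j by (simp add: ones_Suc P_def)
    moreover have "ones t (Suc j) \<le> ones t l" using j by (intro ones_mono) (simp add: P_def)
    ultimately show "k \<in> {1..n}" using j ones_total[OF assms] by (simp add: g_def)
  qed
  have cardP: "card P = n"
  proof -
    have "n = (\<Sum>j<l. t ! j)" using ones_total[OF assms] by (simp add: ones_def)
    also have "\<dots> = (\<Sum>j<l. if t ! j = 1 then 1 else 0)"
      using S_nth[OF assms] by (intro sum.cong) auto
    also have "\<dots> = card P" by (simp add: sum.If_cases P_def Int_def)
    finally show ?thesis by simp
  qed
  have img: "g ` P = {1..n}"
    by (rule card_subset_eq[OF _ sub]) (simp_all add: card_image[OF inj] cardP)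
  have bij: "bij_betw g P {1..n}" using inj img by (simp add: bij_betw_def)
  define p where "p = the_inv_into P g"
  have pg: "p (g j) = j" if "j \<in> P" for j using the_inv_into_f_f[OF inj that] by (simp add: p_def)
  have "phi t = (\<Sum>j\<in>P. 3 ^ (n - g j) * 2 ^ (p (g j)))"
    using phi_ones[OF assms] pg by (simp add: P_def g_def)
  also have "\<dots> = (\<Sum>k\<in>{1..n}. 3 ^ (n - k) * 2 ^ (p k))"
    by (rule sum.reindex_bij_betw[OF bij, where g = "\<lambda>k. 3 ^ (n - k) * 2 ^ (p k)"])
  finally have 1: "phi t = (\<Sum>k\<in>{1..n}. 3 ^ (n - k) * 2 ^ (p k))" .
  have 2: "p k < l \<and> ones t (p k) = k - 1 \<and> ones t (Suc (p k)) = k" if k: "k \<in> {1..n}" for k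
  proof -
    have pk: "p k \<in> P" using the_inv_into_into[OF inj] k img by (simp add: p_def)
    have gk: "g (p k) = k" using f_the_inv_into_f[OF inj] k img by (simp add: p_def)
    show ?thesis using pk gk by (auto simp: P_def g_def ones_Suc)
  qed
  show ?thesis using 1 2 by blast
qed


definition Kset :: "nat \<Rightarrow> nat \<Rightarrow> nat set" where
  "Kset l n = (\<lambda>i. i * (n div gcd l n) + 1) ` {..<gcd l n}"

definition E :: "nat \<Rightarrow> nat \<Rightarrow> nat \<Rightarrow> int" where
  "E l n k = (if k \<in> Kset l n then 3 ^ (n - k) * 2 ^ ((k - 1) * l div n) else 0)"

lemma sigma_eq: assumes "1 \<le> n" "n \<le> l"
  shows "(\<Sum>k\<in>{1..n}. E l n k) =
    (\<Sum>i<gcd l n. 2 ^ (i * l div gcd l n) * 3 ^ (n - 1 - i * n div gcd l n))"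
proof -
  define r where "r = gcd l n"
  define a where "a = n div r"
  define b where "b = l div r"
  have r0: "r > 0" using assms by (simp add: r_def)
  have na: "n = r * a" by (simp add: a_def r_def)
  have lb: "l = r * b" by (simp add: b_def r_def)
  have a0: "a > 0" using assms na by (cases a) auto
  have Ksub: "Kset l n \<subseteq> {1..n}"
  proof
    fix k assume "k \<in> Kset l n"
    then obtain i where i: "i < r" "k = i * a + 1" by (auto simp: Kset_def r_def a_def)
    have "i * a + 1 \<le> n" using i(1) na a0
      by (metis Suc_eq_plus1 Suc_leI mult_less_cancel2 mult.commute)
    then show "k \<in> {1..n}" using i by simp
  qed
  have "(\<Sum>k\<in>{1..n}. E l n k) = (\<Sum>k\<in>{1..n} \<inter> Kset l n. 3 ^ (n - k) * 2 ^ ((k - 1) * l div n))"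
    unfolding E_def by (rule sum.inter_restrict[symmetric]) simp
  also have "{1..n} \<inter> Kset l n = (\<lambda>i. i * a + 1) ` {..<r}"
    using Ksub by (auto simp: Kset_def r_def a_def)
  also have "(\<Sum>k\<in>(\<lambda>i. i * a + 1) ` {..<r}. 3 ^ (n - k) * 2 ^ ((k - 1) * l div n) :: int)
      = (\<Sum>i<r. 3 ^ (n - (i * a + 1)) * 2 ^ ((i * a) * l div n))"
    using a0 by (subst sum.reindex) (auto simp: inj_on_def)
  also have "\<dots> = (\<Sum>i<r. 2 ^ (i * l div r) * 3 ^ (n - 1 - i * n div r))"
  proof (rule sum.cong)
    fix i assume "i \<in> {..<r}"
    have 1: "(i * a) * l div n = i * b"
      using r0 a0 by (simp add: na lb)
    have 2: "i * l div r = i * b" using r0 by (simp add: lb)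
    have 3: "i * n div r = i * a" using r0 by (simp add: na)
    show "3 ^ (n - (i * a + 1)) * 2 ^ ((i * a) * l div n) = (2 ^ (i * l div r) * 3 ^ (n - 1 - i * n div r) :: int)"
      using 1 2 3 by simp
  qed simp
  finally show ?thesis by (simp add: r_def)
qed


lemma term_ineq:
  assumes n1: "1 \<le> n" and nl: "n \<le> l" and k: "k \<in> {1..n}"
    and qp: "n * q \<le> l * (k - 1)" "l * (k - 1) \<le> n * p"
  shows "2 * (3 ^ (n - k) * 2 ^ q) \<le> 3 ^ (n - k) * 2 ^ p + E l n k"
proof (cases "q < p")
  case True
  have "(2::int) * 2 ^ q \<le> 2 ^ p"
    using True by (metis power_Suc power_increasing_iff Suc_leI one_less_numeral_iff semiring_norm(76))
  then have "2 * (3 ^ (n - k) * 2 ^ q) \<le> (3 ^ (n - k) * 2 ^ p :: int)"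
    by (simp add: mult.left_commute)
  moreover have "E l n k \<ge> 0" by (simp add: E_def)
  ultimately show ?thesis by linarith
next
  case False
  have n0: "n > 0" using n1 by simp
  have "n * p \<le> n * q" using False by simp
  then have e1: "n * p = l * (k - 1)" using qp by linarith
  have nqp: "n * q = n * p" using qp e1 \<open>n * p \<le> n * q\<close> by linarith
  have "q = p" using nqp n0 by simp
  then have eq: "n * p = l * (k - 1)" "q = p" using e1 by simp_all
  define r where "r = gcd l n"
  define a where "a = n div r"
  define b where "b = l div r"
  have r0: "r > 0" using n0 by (simp add: r_def)
  have na: "n = r * a" by (simp add: a_def r_def)
  have lb: "l = r * b" by (simp add: b_def r_def)
  have cop: "coprime a b" unfolding a_def b_def r_def
    using div_gcd_coprime[of n l] n0 by (simp add: gcd.commute coprime_commute)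
  have "r * (a * p) = r * (b * (k - 1))" using eq(1) na lb by (simp add: ac_simps)
  then have "a * p = b * (k - 1)" using r0 by simp
  then have "a dvd b * (k - 1)" by (metis dvd_triv_left)
  then have "a dvd (k - 1)" using cop by (simp add: coprime_dvd_mult_right_iff)
  then obtain i where i: "k - 1 = a * i" by blast
  have km: "k - 1 < n" using k by auto
  have "a * i < a * r" using km i na by (simp add: mult.commute)
  then have ir: "i < r" using mult_less_cancel1 by blast
  have kK: "k \<in> Kset l n" unfolding Kset_def
    using ir i k by (auto simp: r_def[symmetric] a_def[symmetric] mult.commute intro!: image_eqI[where x=i])
  have pd: "(k - 1) * l div n = p" using eq(1) n0 by (metis mult.commute nonzero_mult_div_cancel_left not_less0 gr_implies_not0)
  show ?thesis using kK pd eq(2) by (simp add: E_def)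
qed

lemma key:
  assumes n1: "1 \<le> n" and nl: "n \<le> l" and t: "t \<in> S l n" and t': "t' \<in> S l n"
    and late: "\<forall>j\<le>l. l * ones t j + n \<le> n * j + l"
    and early: "\<forall>j\<le>l. n * j \<le> l * ones t' j"
  shows "2 * phi t' \<le> phi t + (\<Sum>i<gcd l n. 2 ^ (i * l div gcd l n) * 3 ^ (n - 1 - i * n div gcd l n))"
proof -
  obtain p where p: "phi t = (\<Sum>k\<in>{1..n}. 3 ^ (n - k) * 2 ^ (p k))"
    "\<forall>k\<in>{1..n}. p k < l \<and> ones t (p k) = k - 1 \<and> ones t (Suc (p k)) = k"
    using phi_pos[OF t] by blast
  obtain q where q: "phi t' = (\<Sum>k\<in>{1..n}. 3 ^ (n - k) * 2 ^ (q k))"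
    "\<forall>k\<in>{1..n}. q k < l \<and> ones t' (q k) = k - 1 \<and> ones t' (Suc (q k)) = k"
    using phi_pos[OF t'] by blast
  have ineq: "2 * (3 ^ (n - k) * 2 ^ q k) \<le> 3 ^ (n - k) * 2 ^ p k + E l n k" if k: "k \<in> {1..n}" for k
  proof (rule term_ineq[OF n1 nl k])
    have ql: "q k \<le> l" using q(2) k by (simp add: less_imp_le)
    have "n * q k \<le> l * ones t' (q k)" using early ql by blast
    thus "n * q k \<le> l * (k - 1)" using q(2) k by simp
    have pk: "p k < l" "ones t (Suc (p k)) = k" using p(2) k by auto
    have "Suc (p k) \<le> l" using pk by simp
    then have h: "l * ones t (Suc (p k)) + n \<le> n * Suc (p k) + l" using late by blast
    then have "l * k + n \<le> n * p k + n + l" using pk by simp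
    then have "l * k \<le> n * p k + l" by simp
    moreover have "l * k = l * (k - 1) + l" using k by (cases k) auto
    ultimately show "l * (k - 1) \<le> n * p k" by simp
  qed
  have "2 * phi t' = (\<Sum>k\<in>{1..n}. 2 * (3 ^ (n - k) * 2 ^ q k))" by (simp add: q(1) sum_distrib_left)
  also have "\<dots> \<le> (\<Sum>k\<in>{1..n}. 3 ^ (n - k) * 2 ^ p k + E l n k)" by (rule sum_mono) (rule ineq)
  also have "\<dots> = phi t + (\<Sum>k\<in>{1..n}. E l n k)" by (simp add: p(1) sum.distrib)
  finally show ?thesis using sigma_eq[OF n1 nl] by simp
qed


lemma ones_rotate:
  assumes "s \<noteq> []" "j \<le> length s"
  shows "(\<Sum>k<a + j. s ! (k mod length s)) = (\<Sum>k<a. s ! (k mod length s)) + ones (rotate a s) j"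
proof -
  let ?f = "\<lambda>k. s ! (k mod length s)"
  have "ones (rotate a s) j = (\<Sum>k<j. ?f (k + a))"
    unfolding ones_def using assms by (intro sum.cong) (auto simp: nth_rotate add.commute)
  also have "\<dots> = sum ?f {0 + a..<j + a}"
    by (simp only: sum.shift_bounds_nat_ivl atLeast0LessThan)
  finally have 1: "ones (rotate a s) j = sum ?f {a..<a + j}" by (simp add: add.commute)
  have "sum ?f {0..<a} + sum ?f {a..<a + j} = sum ?f {0..<a + j}"
    by (rule sum.atLeastLessThan_concat) auto
  then show ?thesis using 1 by (simp add: atLeast0LessThan)
qed

lemma cyclic:
  assumes n1: "1 \<le> n" and s: "s \<in> S l n"
  shows "\<exists>t\<in>orbit s. hd t = 1 \<and> (\<forall>j\<le>l. l * ones t j + n \<le> n * j + l)"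
    and "\<exists>t\<in>orbit s. (\<forall>j\<le>l. n * j \<le> l * ones t j)"
proof -
  have L: "length s = l" using s by (simp add: S_def)
  have sne: "s \<noteq> []" using s n1 by (auto simp: S_def)
  have l0: "l > 0" using sne L by auto
  define F where "F m = (\<Sum>k<m. s ! (k mod l))" for m
  define G where "G m = int l * int (F m) - int n * int m" for m
  have Fwin: "F (a + j) = F a + ones (rotate a s) j" if "j \<le> l" for a j
    using ones_rotate[OF sne, of j a] that L by (simp add: F_def)
  have rS: "rotate a s \<in> S l n" for a by (rule rotate_in_S[OF s])
  have Gwin: "G (a + j) - G a = int l * int (ones (rotate a s) j) - int n * int j" if "j \<le> l" for a j
    using Fwin[OF that, of a] by (simp add: G_def algebra_simps)
  have Gper: "G (a + l) = G a" for a
    using Gwin[of l a] ones_total[OF rS[of a]] by (simp add: algebra_simps)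
  have Gper2: "G (b + l * c) = G b" for b c
  proof (induction c)
    case (Suc c)
    have "G (b + l * Suc c) = G (b + l * c + l)" by (simp add: algebra_simps)
    then show ?case using Gper Suc by simp
  qed simp
  have Gmod: "G m = G (m mod l)" for m
    using Gper2[of "m mod l" "m div l"] by simp
  have fin: "finite (G ` {..<l})" "G ` {..<l} \<noteq> {}" using l0 by auto
  obtain a where a: "a < l" "G a = Min (G ` {..<l})"
    using Min_in[OF fin] by auto
  have Gmin: "G a \<le> G m" for m
    using Gmod[of m] a(2) Min_le[OF fin(1)] l0 by simp
  show "\<exists>t\<in>orbit s. (\<forall>j\<le>l. n * j \<le> l * ones t j)"
  proof (intro bexI[of _ "rotate a s"] allI impI)
    fix j assume "j \<le> l"
    then have "int l * int (ones (rotate a s) j) - int n * int j \<ge> 0"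
      using Gwin[of j a] Gmin[of "a + j"] by simp
    then show "n * j \<le> l * ones (rotate a s) j" by (simp add: of_nat_mult[symmetric] del: of_nat_mult)
  qed (rule rotate_in_orbit[OF sne])
  obtain m where m: "m < l" "G m = Max (G ` {..<l})"
    using Max_in[OF fin] by auto
  have Gmax: "G x \<le> G m" for x
    using Gmod[of x] m(2) Max_ge[OF fin(1)] l0 by simp
  define b where "b = m + l - 1"
  have b1: "Suc b = m + l" using l0 by (simp add: b_def)
  have "G (b + 1) - G b = int l * int (ones (rotate b s) 1) - int n"
    using Gwin[of 1 b] l0 by simp
  moreover have "ones (rotate b s) 1 = rotate b s ! 0" by (simp add: ones_def)
  moreover have "G (b + 1) = G m" using b1 Gper[of m] by simp
  moreover have "G b \<le> G m" by (rule Gmax)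
  ultimately have "int l * int (rotate b s ! 0) \<ge> int n" by simp
  then have "rotate b s ! 0 \<noteq> 0" using n1 by (cases "rotate b s ! 0 = 0") auto
  then have hd1: "rotate b s ! 0 = 1" using S_nth[OF rS[of b], of 0] l0 by auto
  show "\<exists>t\<in>orbit s. hd t = 1 \<and> (\<forall>j\<le>l. l * ones t j + n \<le> n * j + l)"
  proof (intro bexI[of _ "rotate b s"] conjI allI impI)
    show "hd (rotate b s) = 1" using hd1 sne by (simp add: hd_conv_nth)
    fix j assume "j \<le> l"
    have "G (b + j) - G b = int l * int (ones (rotate b s) j) - int n * int j"
      using Gwin[OF \<open>j \<le> l\<close>] by simp
    moreover have "G (b + 1) - G b = int l - int n"
      using Gwin[of 1 b] l0 hd1 by (simp add: ones_def)
    moreover have "G (b + j) \<le> G (b + 1)" using b1 Gper[of m] Gmax[of "b + j"] by simp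
    ultimately have "int l * int (ones (rotate b s) j) + int n \<le> int n * int j + int l" by linarith
    then show "l * ones (rotate b s) j + n \<le> n * j + l" by (simp add: of_nat_mult[symmetric] del: of_nat_mult)
  qed (rule rotate_in_orbit[OF sne])
qed


theorem mainTheorem2:
  fixes l n :: nat and s :: "nat list"
  assumes "1 \<le> n" and "n \<le> l" and "s \<in> S l n"
  shows "Min (phi ` orbit s) \<le> M l n
       \<and> N l n \<le> Max (phi ` {t \<in> orbit s. hd t = 1})"
proof
  have finI: "finite ((\<lambda>s. Min (phi ` orbit s)) ` S l n)" using finite_S by simp
  show "Min (phi ` orbit s) \<le> M l n"
    unfolding M_def using assms(3) finI by (intro Max_ge) auto
  have "M l n \<in> (\<lambda>s. Min (phi ` orbit s)) ` S l n"
    unfolding M_def using assms(3) finI by (intro Max_in) auto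
  then obtain s' where s': "s' \<in> S l n" "M l n = Min (phi ` orbit s')" by auto
  obtain t where t: "t \<in> orbit s" "hd t = 1" "\<forall>j\<le>l. l * ones t j + n \<le> n * j + l"
    using cyclic(1)[OF assms(1,3)] by blast
  obtain t' where t': "t' \<in> orbit s'" "\<forall>j\<le>l. n * j \<le> l * ones t' j"
    using cyclic(2)[OF assms(1) s'(1)] by blast
  have tS: "t \<in> S l n" using orbit_S[OF assms(3)] t(1) by blast
  have t'S: "t' \<in> S l n" using orbit_S[OF s'(1)] t'(1) by blast
  have "M l n \<le> phi t'" unfolding s'(2) using t'(1) finite_orbit by (intro Min_le) auto
  moreover have "phi t \<le> Max (phi ` {t \<in> orbit s. hd t = 1})"
    using t finite_orbit by (intro Max_ge) auto
  moreover have "2 * phi t' \<le> phi t + (\<Sum>i<gcd l n. 2 ^ (i * l div gcd l n) * 3 ^ (n - 1 - i * n div gcd l n))"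
    by (rule key[OF assms(1,2) tS t'S t(3) t'(2)])
  ultimately show "N l n \<le> Max (phi ` {t \<in> orbit s. hd t = 1})"
    unfolding N_def by linarith
qed

end
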